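(* Let $\mathfrak{S}=(\mathcal{X},\mathsf{S},\gamma,(\Lambda_{a})_{a\in\mathcal{A}})$ be a spectral decomposition system for the Euclidean space $\mathfrak{H}$, let $\mathcal{D}$ be a nonempty subset of $\mathfrak{H}$, and set \[\mathcal{K}=\Big\{\sum_{i=1}^m\alpha_iX_i : m\geq 1,\ (X_i)_{1\leq i\leq m}\in\mathcal{D}^m,\ (\alpha_i)_{1\leq i\leq m}\in[0,+\infty)^m\Big\}.\] Then the following are equivalent: (i) $\langle X,Y\rangle=\langle\gamma(X),\gamma(Y)\rangle$ for all $X,Y\in\mathcal{D}$; (ii) $\|X-Y\|=\|\gamma(X)-\gamma(Y)\|$ for all $X,Y\in\mathcal{D}$; (iii) there exists $a\in\mathcal{A}$ such that $X=\Lambda_a\gamma(X)$ for all $X\in\mathcal{D}$; (iv) there exists $a\in\mathcal{A}$ such that $X=\Lambda_a\gamma(X)$ for all $X\in\mathcal{K}$. Moreover, if one of (i)–(iv) holds, then for every $m\geq 1$, every $(X_i)_{1\leq i\leq m}\in\mathcal{D}^m$ and every $(\alpha_i)_{1\leq i\leq m}\in[0,+\infty)^m$, $\gamma\big(\sum_{i=1}^m\alpha_iX_i\big)=\sum_{i=1}^m\alpha_i\gamma(X_i)$.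
   Context: A Euclidean space is a finite-dimensional real inner product space; inner products are written $\langle\cdot,\cdot\rangle$ and norms $\|\cdot\|$. Let $\mathfrak{H}$ and $\mathcal{X}$ be Euclidean spaces, let $\mathsf{S}$ be a group acting on $\mathcal{X}$ by linear isometries, let $\gamma\colon\mathfrak{H}\to\mathcal{X}$, and let $(\Lambda_a)_{a\in\mathcal{A}}$ be a family of linear operators from $\mathcal{X}$ to $\mathfrak{H}$. The orbit of $x$ is $\mathsf{S}\cdot x=\{s\cdot x: s\in\mathsf{S}\}$; a map $f$ on $\mathcal{X}$ is $\mathsf{S}$-invariant if $f(s\cdot x)=f(x)$ for all $s,x$. The tuple is a spectral decomposition system for $\mathfrak{H}$ if: [A] every $\Lambda_a$ is an isometry; [B] there exists an $\mathsf{S}$-invariant $\tau\colon\mathcal{X}\to\mathcal{X}$ with $\tau(x)\in\mathsf{S}\cdot x$ for all $x$ and $\gamma\circ\Lambda_a=\tau$ for all $a$; [C] for every $X\in\mathfrak{H}$ there is $a$ with $X=\Lambda_a\gamma(X)$; [D] $\langle X,Y\rangle\leq\langle\gamma(X),\gamma(Y)\rangle$ for all $X,Y\in\mathfrak{H}$. *)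

theory Defs
  imports "HOL-Analysis.Analysis" "HOL-Algebra.Group"
begin

definition isometric_linear_action :: "('g, 'b) monoid_scheme \<Rightarrow> ('g \<Rightarrow> 'x::euclidean_space \<Rightarrow> 'x) \<Rightarrow> bool" where
  "isometric_linear_action G act \<longleftrightarrow>
     group G \<and>
     (\<forall>s\<in>carrier G. linear (act s) \<and> (\<forall>x. norm (act s x) = norm x)) \<and>
     (\<forall>x. act \<one>\<^bsub>G\<^esub> x = x) \<and>
     (\<forall>s\<in>carrier G. \<forall>t\<in>carrier G. \<forall>x. act (s \<otimes>\<^bsub>G\<^esub> t) x = act s (act t x))"

definition orbit :: "('g, 'b) monoid_scheme \<Rightarrow> ('g \<Rightarrow> 'x \<Rightarrow> 'x) \<Rightarrow> 'x \<Rightarrow> 'x set" where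
  "orbit G act x = {act s x | s. s \<in> carrier G}"

definition spectral_decomposition_system ::
  "('g, 'b) monoid_scheme \<Rightarrow> ('g \<Rightarrow> 'x::euclidean_space \<Rightarrow> 'x) \<Rightarrow> ('h::euclidean_space \<Rightarrow> 'x)
    \<Rightarrow> 'a set \<Rightarrow> ('a \<Rightarrow> 'x \<Rightarrow> 'h) \<Rightarrow> bool" where
  "spectral_decomposition_system G act \<gamma> A \<Lambda> \<longleftrightarrow>
     isometric_linear_action G act \<and>
     (\<forall>a\<in>A. linear (\<Lambda> a) \<and> (\<forall>x. norm (\<Lambda> a x) = norm x)) \<and>
     (\<exists>\<tau>. (\<forall>s\<in>carrier G. \<forall>x. \<tau> (act s x) = \<tau> x) \<and>
          (\<forall>x. \<tau> x \<in> orbit G act x) \<and>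
          (\<forall>a\<in>A. \<forall>x. \<gamma> (\<Lambda> a x) = \<tau> x)) \<and>
     (\<forall>X. \<exists>a\<in>A. X = \<Lambda> a (\<gamma> X)) \<and>
     (\<forall>X Y. inner X Y \<le> inner (\<gamma> X) (\<gamma> Y))"

definition cone_gen :: "'h::real_vector set \<Rightarrow> 'h set" where
  "cone_gen D = {(\<Sum>i=1..m. \<alpha> i *\<^sub>R X i) | m (\<alpha>::nat \<Rightarrow> real) (X::nat \<Rightarrow> 'h).
       m \<ge> 1 \<and> (\<forall>i\<in>{1..m}. X i \<in> D \<and> \<alpha> i \<ge> 0)}"

end

theory Submission
  imports Defs
begin

lemma gram_sum:
  fixes u :: "'i \<Rightarrow> 'h::real_inner" and v :: "'i \<Rightarrow> 'x::real_inner"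
  assumes "\<forall>i\<in>I. \<forall>j\<in>I. inner (u i) (u j) = inner (v i) (v j)"
  shows "inner (\<Sum>i\<in>I. c i *\<^sub>R u i) (\<Sum>i\<in>I. d i *\<^sub>R u i)
       = inner (\<Sum>i\<in>I. c i *\<^sub>R v i) (\<Sum>i\<in>I. d i *\<^sub>R v i)"
  using assms by (simp add: inner_sum_left inner_sum_right)

lemma linear_iso_inner:
  fixes L :: "'x::real_inner \<Rightarrow> 'h::real_inner"
  assumes "linear L" "\<forall>x. norm (L x) = norm x"
  shows "inner (L x) (L y) = inner x y"
proof -
  have "norm (L (x + y))^2 = norm (x + y)^2" using assms by simp
  hence "inner (L x + L y) (L x + L y) = inner (x + y) (x + y)"
    using assms(1) by (simp add: linear_add power2_norm_eq_inner)
  moreover have "inner (L x) (L x) = inner x x" "inner (L y) (L y) = inner y y"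
    using assms(2) by (metis power2_norm_eq_inner)+
  ultimately show ?thesis by (simp add: inner_add_left inner_add_right inner_commute)
qed

lemma additivity:
  fixes \<gamma> :: "'h::euclidean_space \<Rightarrow> 'x::euclidean_space"
  assumes Dq: "\<And>X Y. inner X Y \<le> inner (\<gamma> X) (\<gamma> Y)"
    and ng: "\<And>X. norm (\<gamma> X) = norm X"
    and fin: "finite I"
    and pw: "\<forall>i\<in>I. \<forall>j\<in>I. inner (X i) (X j) = inner (\<gamma> (X i)) (\<gamma> (X j))"
    and pos: "\<forall>i\<in>I. \<alpha> i \<ge> 0"
  shows "\<gamma> (\<Sum>i\<in>I. \<alpha> i *\<^sub>R X i) = (\<Sum>i\<in>I. \<alpha> i *\<^sub>R \<gamma> (X i))"
proof -
  define Z where "Z = (\<Sum>i\<in>I. \<alpha> i *\<^sub>R X i)"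
  define V where "V = (\<Sum>i\<in>I. \<alpha> i *\<^sub>R \<gamma> (X i))"
  have n1: "inner (\<gamma> Z) (\<gamma> Z) = inner Z Z" using ng by (metis power2_norm_eq_inner)
  have n2: "inner V V = inner Z Z" unfolding V_def Z_def using gram_sum[OF pw] by metis
  have "inner Z Z = (\<Sum>i\<in>I. \<alpha> i * inner Z (X i))" by (subst (2) Z_def) (simp add: inner_sum_right)
  also have "\<dots> \<le> (\<Sum>i\<in>I. \<alpha> i * inner (\<gamma> Z) (\<gamma> (X i)))"
    by (rule sum_mono) (simp add: pos mult_left_mono Dq)
  also have "\<dots> = inner (\<gamma> Z) V" by (simp add: V_def inner_sum_right)
  finally have le: "inner Z Z \<le> inner (\<gamma> Z) V" .
  have "inner (\<gamma> Z - V) (\<gamma> Z - V) = inner (\<gamma> Z) (\<gamma> Z) - 2 * inner (\<gamma> Z) V + inner V V"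
    by (simp add: inner_diff_left inner_diff_right inner_commute)
  also have "\<dots> \<le> 0" using n1 n2 le by linarith
  finally have "inner (\<gamma> Z - V) (\<gamma> Z - V) \<le> 0" .
  hence "\<gamma> Z - V = 0" by (metis inner_gt_zero_iff not_le)
  thus ?thesis unfolding Z_def V_def by simp
qed

theorem proposition3p6:
  fixes G :: "('g, 'b) monoid_scheme"
    and act :: "'g \<Rightarrow> 'x::euclidean_space \<Rightarrow> 'x"
    and \<gamma> :: "'h::euclidean_space \<Rightarrow> 'x"
    and A :: "'a set"
    and \<Lambda> :: "'a \<Rightarrow> 'x \<Rightarrow> 'h"
    and D :: "'h set"
  assumes sds: "spectral_decomposition_system G act \<gamma> A \<Lambda>"
    and D_ne: "D \<noteq> {}"
  shows "((\<forall>X\<in>D. \<forall>Y\<in>D. inner X Y = inner (\<gamma> X) (\<gamma> Y))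
            \<longleftrightarrow> (\<forall>X\<in>D. \<forall>Y\<in>D. norm (X - Y) = norm (\<gamma> X - \<gamma> Y)))
       \<and> ((\<forall>X\<in>D. \<forall>Y\<in>D. norm (X - Y) = norm (\<gamma> X - \<gamma> Y))
            \<longleftrightarrow> (\<exists>a\<in>A. \<forall>X\<in>D. X = \<Lambda> a (\<gamma> X)))
       \<and> ((\<exists>a\<in>A. \<forall>X\<in>D. X = \<Lambda> a (\<gamma> X))
            \<longleftrightarrow> (\<exists>a\<in>A. \<forall>X\<in>cone_gen D. X = \<Lambda> a (\<gamma> X)))
       \<and> ((\<forall>X\<in>D. \<forall>Y\<in>D. inner X Y = inner (\<gamma> X) (\<gamma> Y)) \<longrightarrow>
            (\<forall>m::nat. \<forall>X \<alpha>. m \<ge> 1 \<and> (\<forall>i\<in>{1..m}. X i \<in> D \<and> \<alpha> i \<ge> (0::real)) \<longrightarrow>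
               \<gamma> (\<Sum>i=1..m. \<alpha> i *\<^sub>R X i) = (\<Sum>i=1..m. \<alpha> i *\<^sub>R \<gamma> (X i))))"
proof -
  have lin: "\<And>a. a \<in> A \<Longrightarrow> linear (\<Lambda> a)"
    and iso: "\<And>a x. a \<in> A \<Longrightarrow> norm (\<Lambda> a x) = norm x"
    and C: "\<And>X. \<exists>a\<in>A. X = \<Lambda> a (\<gamma> X)"
    and Dq: "\<And>X Y. inner X Y \<le> inner (\<gamma> X) (\<gamma> Y)"
    using sds unfolding spectral_decomposition_system_def by auto
  obtain \<tau> where tau: "\<And>a x. a \<in> A \<Longrightarrow> \<gamma> (\<Lambda> a x) = \<tau> x"
    using sds unfolding spectral_decomposition_system_def by blast
  have Lin: "\<And>a x y. a \<in> A \<Longrightarrow> inner (\<Lambda> a x) (\<Lambda> a y) = inner x y"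
    using linear_iso_inner lin iso by blast
  have ng: "norm (\<gamma> X) = norm X" for X
  proof -
    obtain b where b: "b \<in> A" "X = \<Lambda> b (\<gamma> X)" using C by blast
    have "norm (\<Lambda> b (\<gamma> X)) = norm (\<gamma> X)" by (rule iso[OF b(1)])
    thus ?thesis using b(2)[symmetric] by simp
  qed
  have ng2: "\<And>X. inner (\<gamma> X) (\<gamma> X) = inner X X" using ng by (metis power2_norm_eq_inner)
  have fixg: "\<And>a X. a \<in> A \<Longrightarrow> \<gamma> (\<Lambda> a (\<gamma> X)) = \<gamma> X"
  proof -
    fix a X assume a: "a \<in> A"
    obtain b where b: "b \<in> A" "X = \<Lambda> b (\<gamma> X)" using C by blast
    have "\<gamma> X = \<tau> (\<gamma> X)" using tau[OF b(1)] b(2) by metis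
    thus "\<gamma> (\<Lambda> a (\<gamma> X)) = \<gamma> X" using tau[OF a] by simp
  qed
  let ?i = "\<forall>X\<in>D. \<forall>Y\<in>D. inner X Y = inner (\<gamma> X) (\<gamma> Y)"
  let ?ii = "\<forall>X\<in>D. \<forall>Y\<in>D. norm (X - Y) = norm (\<gamma> X - \<gamma> Y)"
  let ?iii = "\<exists>a\<in>A. \<forall>X\<in>D. X = \<Lambda> a (\<gamma> X)"
  let ?iv = "\<exists>a\<in>A. \<forall>X\<in>cone_gen D. X = \<Lambda> a (\<gamma> X)"
  have nd: "norm (X - Y)^2 = inner X X + inner Y Y - 2 * inner X Y" for X Y :: 'h
    by (simp add: power2_norm_eq_inner inner_diff_left inner_diff_right inner_commute)
  have ndg: "norm (U - V)^2 = inner U U + inner V V - 2 * inner U V" for U V :: 'x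
    by (simp add: power2_norm_eq_inner inner_diff_left inner_diff_right inner_commute)
  have i_ii: "?i \<longleftrightarrow> ?ii"
  proof
    assume h: ?i
    show ?ii
    proof (intro ballI)
      fix X Y assume XY: "X \<in> D" "Y \<in> D"
      have "inner X Y = inner (\<gamma> X) (\<gamma> Y)" using h XY by blast
      hence "norm (X - Y)^2 = norm (\<gamma> X - \<gamma> Y)^2" unfolding nd ndg ng2 by simp
      thus "norm (X - Y) = norm (\<gamma> X - \<gamma> Y)" by (simp add: power2_eq_iff_nonneg)
    qed
  next
    assume h: ?ii
    show ?i
    proof (intro ballI)
      fix X Y assume "X \<in> D" "Y \<in> D"
      hence "norm (X - Y)^2 = norm (\<gamma> X - \<gamma> Y)^2" using h by simp
      thus "inner X Y = inner (\<gamma> X) (\<gamma> Y)" unfolding nd ndg ng2 by simp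
    qed
  qed
  have iii_i: "?iii \<Longrightarrow> ?i"
  proof -
    assume ?iii
    then obtain a where a: "a \<in> A" "\<forall>X\<in>D. X = \<Lambda> a (\<gamma> X)" by blast
    show ?i
    proof (intro ballI)
      fix X Y assume X: "X \<in> D" and Y: "Y \<in> D"
      have eX: "\<Lambda> a (\<gamma> X) = X" using a(2)[rule_format, OF X, symmetric] .
      have eY: "\<Lambda> a (\<gamma> Y) = Y" using a(2)[rule_format, OF Y, symmetric] .
      have "inner (\<Lambda> a (\<gamma> X)) (\<Lambda> a (\<gamma> Y)) = inner (\<gamma> X) (\<gamma> Y)" by (rule Lin[OF a(1)])
      thus "inner X Y = inner (\<gamma> X) (\<gamma> Y)" by (simp only: eX eY)
    qed
  qed
  have add: "?i \<Longrightarrow> finite I \<Longrightarrow> \<forall>i\<in>I. X i \<in> D \<and> \<alpha> i \<ge> 0 \<Longrightarrow>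
      \<gamma> (\<Sum>i\<in>I. \<alpha> i *\<^sub>R X i) = (\<Sum>i\<in>I. \<alpha> i *\<^sub>R \<gamma> (X i))" for I and X :: "'i \<Rightarrow> 'h" and \<alpha>
    by (rule additivity[OF Dq ng]) auto
  have i_iii: "?i \<Longrightarrow> ?iii"
  proof -
    assume hi: ?i
    obtain F where F: "F \<subseteq> D" "independent F" "D \<subseteq> span F"
      using maximal_independent_subset by blast
    have finF: "finite F" using F(2) finiteI_independent by blast
    define Z where "Z = (\<Sum>x\<in>F. x)"
    obtain a where a: "a \<in> A" "Z = \<Lambda> a (\<gamma> Z)" using C by blast
    have gZ: "\<gamma> Z = (\<Sum>x\<in>F. \<gamma> x)"
      using add[OF hi finF, of id "\<lambda>_. 1"] F(1) unfolding Z_def by auto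
    define P where "P x = \<Lambda> a (\<gamma> x)" for x
    have sumP: "(\<Sum>x\<in>F. P x) = Z"
      using a gZ lin[OF a(1)] unfolding P_def by (simp add: linear_sum)
    have dnn: "\<forall>x\<in>F. \<forall>y\<in>F. 0 \<le> inner x y - inner (P x) y"
    proof (intro ballI)
      fix x y assume xy: "x \<in> F" "y \<in> F"
      have "inner (P x) y \<le> inner (\<gamma> (P x)) (\<gamma> y)" by (rule Dq)
      also have "\<dots> = inner (\<gamma> x) (\<gamma> y)" unfolding P_def using fixg a(1) by simp
      also have "\<dots> = inner x y" using hi xy F(1) by (metis subsetD)
      finally show "0 \<le> inner x y - inner (P x) y" by simp
    qed
    have "(\<Sum>x\<in>F. \<Sum>y\<in>F. inner x y - inner (P x) y) = inner Z Z - inner (\<Sum>x\<in>F. P x) Z"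
    proof -
      have "(\<Sum>x\<in>F. \<Sum>y\<in>F. inner x y - inner (P x) y) = (\<Sum>y\<in>F. \<Sum>x\<in>F. inner x y - inner (P x) y)"
        by (rule sum.swap)
      thus ?thesis unfolding Z_def by (simp add: inner_sum_left inner_sum_right sum_subtractf)
    qed
    also have "\<dots> = 0" by (simp only: sumP diff_self)
    finally have s0: "(\<Sum>x\<in>F. \<Sum>y\<in>F. inner x y - inner (P x) y) = 0" .
    have each: "\<forall>x\<in>F. (\<Sum>y\<in>F. inner x y - inner (P x) y) = 0"
    proof -
      have nn: "0 \<le> (\<Sum>y\<in>F. inner x y - inner (P x) y)" if "x \<in> F" for x
        using dnn that by (intro sum_nonneg) blast
      have "(\<Sum>x\<in>F. \<Sum>y\<in>F. inner x y - inner (P x) y) = 0 \<longleftrightarrow> (\<forall>x\<in>F. (\<Sum>y\<in>F. inner x y - inner (P x) y) = 0)"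
        by (rule sum_nonneg_eq_0_iff[OF finF nn])
      thus ?thesis using s0 by blast
    qed
    have PF: "P x = x" if x: "x \<in> F" for x
    proof -
      have "inner x x - inner (P x) x = 0"
      proof -
        have nn: "0 \<le> inner x y - inner (P x) y" if "y \<in> F" for y
          using dnn that x by blast
        have "(\<Sum>y\<in>F. inner x y - inner (P x) y) = 0 \<longleftrightarrow> (\<forall>y\<in>F. inner x y - inner (P x) y = 0)"
          by (rule sum_nonneg_eq_0_iff[OF finF nn])
        thus ?thesis using each x by blast
      qed
      moreover have "inner (P x) (P x) = inner x x" unfolding P_def using Lin[OF a(1)] ng2 by simp
      ultimately have "inner (P x - x) (P x - x) = 0"
        by (simp add: inner_diff_left inner_diff_right inner_commute)
      thus ?thesis by simp
    qed
    show ?iii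
    proof (intro bexI[OF _ a(1)] ballI)
      fix Y assume Y: "Y \<in> D"
      then have "Y \<in> span F" using F(3) by blast
      then obtain c where c: "Y = (\<Sum>x\<in>F. c x *\<^sub>R x)" using span_finite[OF finF] by auto
      define V where "V = (\<Sum>x\<in>F. c x *\<^sub>R \<gamma> x)"
      have pwF: "\<forall>i\<in>F. \<forall>j\<in>F. inner (id i) (id j) = inner (\<gamma> i) (\<gamma> j)" using hi F(1) by (simp add: subset_iff)
      have e1: "inner V V = inner Y Y" unfolding V_def c using gram_sum[OF pwF, of c c] by simp
      have e2: "inner (\<gamma> Y) V = inner Y Y"
      proof -
        have "inner (\<gamma> Y) V = (\<Sum>x\<in>F. c x * inner (\<gamma> Y) (\<gamma> x))" by (simp add: V_def inner_sum_right)
        also have "\<dots> = (\<Sum>x\<in>F. c x * inner Y x)" using hi Y F(1) by (intro sum.cong refl) (metis subsetD)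
        also have "\<dots> = inner Y Y" by (subst (2) c) (simp add: inner_sum_right)
        finally show ?thesis .
      qed
      have "inner (\<gamma> Y - V) (\<gamma> Y - V) = inner (\<gamma> Y) (\<gamma> Y) - 2 * inner (\<gamma> Y) V + inner V V"
        by (simp add: inner_diff_left inner_diff_right inner_commute)
      also have "\<dots> = 0" using e1 e2 ng2 by simp
      finally have "\<gamma> Y = V" by simp
      hence "\<Lambda> a (\<gamma> Y) = (\<Sum>x\<in>F. c x *\<^sub>R P x)"
        unfolding V_def P_def using lin[OF a(1)] by (simp add: linear_sum linear_scale)
      also have "\<dots> = Y" using PF c by simp
      finally show "Y = \<Lambda> a (\<gamma> Y)" by simp
    qed
  qed
  have iv_iii: "?iv \<Longrightarrow> ?iii"
  proof -
    have "D \<subseteq> cone_gen D"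
    proof
      fix X assume "X \<in> D"
      thus "X \<in> cone_gen D" unfolding cone_gen_def
        by (intro CollectI exI[of _ 1] exI[of _ "\<lambda>_. 1"] exI[of _ "\<lambda>_. X"]) auto
    qed
    thus "?iv \<Longrightarrow> ?iii" by blast
  qed
  have iii_iv: "?iii \<Longrightarrow> ?iv"
  proof -
    assume h: ?iii
    hence hi: ?i using iii_i by blast
    obtain a where a: "a \<in> A" "\<forall>X\<in>D. X = \<Lambda> a (\<gamma> X)" using h by blast
    show ?iv
    proof (intro bexI[OF _ a(1)] ballI)
      fix Z assume Zc: "Z \<in> cone_gen D"
      obtain m :: nat and \<alpha> X where Z: "Z = (\<Sum>i=1..m. \<alpha> i *\<^sub>R X i)"
        and h2: "\<forall>i\<in>{1..m}. X i \<in> D \<and> \<alpha> i \<ge> 0" using Zc unfolding cone_gen_def by blast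
      have "\<gamma> Z = (\<Sum>i=1..m. \<alpha> i *\<^sub>R \<gamma> (X i))" unfolding Z by (rule add[OF hi _ h2]) simp
      hence "\<Lambda> a (\<gamma> Z) = (\<Sum>i=1..m. \<alpha> i *\<^sub>R \<Lambda> a (\<gamma> (X i)))"
        using lin[OF a(1)] by (simp add: linear_sum linear_scale)
      also have "\<dots> = Z" unfolding Z
        using a(2) h2 by (intro sum.cong refl) (metis atLeastAtMost_iff)
      finally show "Z = \<Lambda> a (\<gamma> Z)" by simp
    qed
  qed
  have last: "?i \<longrightarrow> (\<forall>m::nat. \<forall>X \<alpha>. m \<ge> 1 \<and> (\<forall>i\<in>{1..m}. X i \<in> D \<and> \<alpha> i \<ge> (0::real)) \<longrightarrow>
               \<gamma> (\<Sum>i=1..m. \<alpha> i *\<^sub>R X i) = (\<Sum>i=1..m. \<alpha> i *\<^sub>R \<gamma> (X i)))"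
    using add by blast
  show ?thesis using i_ii iii_i i_iii iv_iii iii_iv last by blast
qed

end
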